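(* Let $\nu(\mathbb{R}^d\setminus\{0\})<\infty$ and assume (B) and (C) below hold with some $E\subset\mathbb{S}^{d-1}$ and $\kappa\ge0$. Then there exists $C_{17}>0$ such that $$\int_{\mathbb{R}^d}e^{\kappa(\theta\cdot z)}\nu^{n*}(z)\,dz\le(C_0/C_1)\big(C_{17}\Psi(\infty)\big)^n,\quad\theta\in E,\ n\in\mathbb{N},$$ and $\lim_{R\to\infty}\sup_{\theta\in E}\int_{|z|>R}e^{\kappa(\theta\cdot z)}\nu^{n*}(z)\,dz=0$ for every $n\in\mathbb{N}$.
   Context: Let $d\ge1$ and $\nu$ a Lévy measure on $\mathbb{R}^d\setminus\{0\}$. $\Phi(\xi)=\int\big(1-e^{i\xi\cdot y}+i\xi\cdot y\,\mathbf 1_{B(0,1)}(y)\big)\nu(dy)$, $\Psi(r)=\sup_{|\xi|\le r}\mathrm{Re}\,\Phi(\xi)$, $\Psi(\infty)=\lim_{r\to\infty}\Psi(r)$. $\nu^{n*}$ is the density of the $n$-fold convolution of $\nu$. $\Gamma_E=\{y\ne0:y/|y|\in E\}$. (B) $\nu(dx)=\nu(x)dx$; there are nonincreasing $f:(0,\infty)\to(0,\infty)$ and $C_0>0$ with $\nu(x)\le C_0f(|x|)$, $\liminf_{r\to0^+}\frac{\nu(\{|x|>r\})}{f(r)r^d}>0$, and $K(r):=\sup_{|x|>1}\frac{1}{f(|x|)}\int_{|x-y|>r,|y|>r}f(|x-y|)f(|y|)dy$ decreases to $0$ as $r\to\infty$. (C) $\lim_{r\to\infty}\nu(r\theta-y)/\nu(r\theta)=e^{\kappa(\theta\cdot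 y)}$ for all $y\in\mathbb{R}^d$, $\theta\in E$, and $C_1:=\inf_{x\in\Gamma_E}\nu(x)/f(|x|)>0$. *)

theory Defs
  imports "HOL-Analysis.Analysis"
begin

text \<open>Density of the n-fold convolution of the measure nu(x) dx (n >= 1).
  The value at n = 0 is a dummy and is never used.\<close>
fun conv_pow :: "('a::euclidean_space \<Rightarrow> real) \<Rightarrow> nat \<Rightarrow> 'a \<Rightarrow> ennreal" where
  "conv_pow nu 0 = (\<lambda>z. 0)"
| "conv_pow nu (Suc 0) = (\<lambda>z. ennreal (nu z))"
| "conv_pow nu (Suc (Suc n)) =
     (\<lambda>z. \<integral>\<^sup>+ y. ennreal (nu (z - y)) * conv_pow nu (Suc n) y \<partial>lborel)"

definition Phi :: "('a::euclidean_space \<Rightarrow> real) \<Rightarrow> 'a \<Rightarrow> complex" where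
  "Phi nu \<xi> = integral\<^sup>L lborel (\<lambda>y.
      (1 - exp (\<i> * complex_of_real (\<xi> \<bullet> y))
         + \<i> * complex_of_real (\<xi> \<bullet> y) * complex_of_real (indicator (ball 0 1) y))
      * complex_of_real (nu y))"

definition Psi :: "('a::euclidean_space \<Rightarrow> real) \<Rightarrow> real \<Rightarrow> real" where
  "Psi nu r = Sup {Re (Phi nu \<xi>) | \<xi>. norm \<xi> \<le> r}"

definition Psi_inf :: "('a::euclidean_space \<Rightarrow> real) \<Rightarrow> real" where
  "Psi_inf nu = Lim at_top (Psi nu)"

definition Gamma_cone :: "'a::euclidean_space set \<Rightarrow> 'a set" where
  "Gamma_cone E = {y. y \<noteq> 0 \<and> scaleR (1 / norm y) y \<in> E}"

definition K_fun :: "'a::euclidean_space itself \<Rightarrow> (real \<Rightarrow> real) \<Rightarrow> real \<Rightarrow> ennreal" where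
  "K_fun TYPE('a) f r = (SUP x\<in>{x::'a. norm x > 1}.
      ennreal (1 / f (norm x)) *
      (\<integral>\<^sup>+ y. indicator {y. norm (x - y) > r \<and> norm y > r} y
               * ennreal (f (norm (x - y)) * f (norm y)) \<partial>(lborel :: 'a measure)))"

end

theory Submission
  imports Defs
begin



lemma conv_pow_meas_Suc:
  assumes [measurable]: "nu \<in> borel_measurable lborel"
  shows "conv_pow nu (Suc n) \<in> borel_measurable lborel"
proof (induction n)
  case 0 then show ?case by simp
next
  case (Suc n)
  then have [measurable]: "conv_pow nu (Suc n) \<in> borel_measurable lborel" by simp
  have "(\<lambda>(z,y). ennreal (nu (z - y)) * conv_pow nu (Suc n) y) \<in> borel_measurable (lborel \<Otimes>\<^sub>M lborel)"
    by measurable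
  then have "(\<lambda>z. \<integral>\<^sup>+ y. ennreal (nu (z - y)) * conv_pow nu (Suc n) y \<partial>lborel) \<in> borel_measurable lborel"
    by (rule lborel.borel_measurable_nn_integral)
  then show ?case by simp
qed

lemma conv_pow_meas:
  assumes "nu \<in> borel_measurable lborel"
  shows "conv_pow nu n \<in> borel_measurable lborel"
  using conv_pow_meas_Suc[OF assms] by (cases n) auto




lemma lborel_shift:
  fixes h :: "'a::euclidean_space \<Rightarrow> ennreal"
  assumes [measurable]: "h \<in> borel_measurable lborel"
  shows "(\<integral>\<^sup>+ z. h z \<partial>lborel) = (\<integral>\<^sup>+ w. h (w + y) \<partial>lborel)"
proof -
  have "(\<integral>\<^sup>+ z. h z \<partial>lborel) = (\<integral>\<^sup>+ z. h z \<partial>distr lborel borel ((+) y))"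
    by (simp add: lborel_distr_plus)
  also have "\<dots> = (\<integral>\<^sup>+ w. h (y + w) \<partial>lborel)"
    by (subst nn_integral_distr) auto
  finally show ?thesis by (simp add: add.commute)
qed

lemma conv_key:
  fixes nu :: "'a::euclidean_space \<Rightarrow> real" and e h :: "'a \<Rightarrow> ennreal"
  assumes [measurable]: "nu \<in> borel_measurable lborel" "e \<in> borel_measurable lborel" "h \<in> borel_measurable lborel"
  shows "(\<integral>\<^sup>+ z. e z * conv_pow nu (Suc (Suc n)) z * h z \<partial>lborel)
       = (\<integral>\<^sup>+ y. conv_pow nu (Suc n) y * (\<integral>\<^sup>+ w. e (w + y) * ennreal (nu w) * h (w + y) \<partial>lborel) \<partial>lborel)"
proof -
  note [measurable] = conv_pow_meas_Suc[OF assms(1)]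
  have "(\<integral>\<^sup>+ z. e z * conv_pow nu (Suc (Suc n)) z * h z \<partial>lborel)
      = (\<integral>\<^sup>+ z. (\<integral>\<^sup>+ y. (e z * h z) * (ennreal (nu (z - y)) * conv_pow nu (Suc n) y) \<partial>lborel) \<partial>lborel)"
    by (subst nn_integral_cmult) (auto simp: mult_ac)
  also have "\<dots> = (\<integral>\<^sup>+ y. (\<integral>\<^sup>+ z. (e z * h z) * (ennreal (nu (z - y)) * conv_pow nu (Suc n) y) \<partial>lborel) \<partial>lborel)"
    by (rule lborel_pair.Fubini'[symmetric]) measurable
  also have "\<dots> = (\<integral>\<^sup>+ y. conv_pow nu (Suc n) y * (\<integral>\<^sup>+ z. e z * ennreal (nu (z - y)) * h z \<partial>lborel) \<partial>lborel)"
    by (rule nn_integral_cong, subst nn_integral_cmult[symmetric]) (auto simp: mult_ac)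
  also have "\<dots> = (\<integral>\<^sup>+ y. conv_pow nu (Suc n) y * (\<integral>\<^sup>+ w. e (w + y) * ennreal (nu w) * h (w + y) \<partial>lborel) \<partial>lborel)"
  proof (rule nn_integral_cong)
    fix y :: 'a
    have "(\<integral>\<^sup>+ z. e z * ennreal (nu (z - y)) * h z \<partial>lborel) = (\<integral>\<^sup>+ w. e (w + y) * ennreal (nu (w + y - y)) * h (w + y) \<partial>lborel)"
      by (rule lborel_shift) measurable
    then show "conv_pow nu (Suc n) y * (\<integral>\<^sup>+ z. e z * ennreal (nu (z - y)) * h z \<partial>lborel) = conv_pow nu (Suc n) y * (\<integral>\<^sup>+ w. e (w + y) * ennreal (nu w) * h (w + y) \<partial>lborel)"
      by simp
  qed
  finally show ?thesis .
qed






definition Mom :: "('a::euclidean_space \<Rightarrow> real) \<Rightarrow> real \<Rightarrow> 'a \<Rightarrow> nat \<Rightarrow> ennreal" where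
  "Mom nu k th n = (\<integral>\<^sup>+ z. ennreal (exp (k * (th \<bullet> z))) * conv_pow nu n z \<partial>lborel)"

definition Tl :: "('a::euclidean_space \<Rightarrow> real) \<Rightarrow> real \<Rightarrow> 'a \<Rightarrow> nat \<Rightarrow> real \<Rightarrow> ennreal" where
  "Tl nu k th n R = (\<integral>\<^sup>+ z\<in>{z. norm z > R}. ennreal (exp (k * (th \<bullet> z))) * conv_pow nu n z \<partial>lborel)"

lemma exp_split: "ennreal (exp (k * (th \<bullet> (w + y)))) = ennreal (exp (k * (th \<bullet> w))) * ennreal (exp (k * (th \<bullet> y)))"
  by (simp add: inner_add_right distrib_left exp_add ennreal_mult)

lemma Mom_mult:
  fixes nu :: "'a::euclidean_space \<Rightarrow> real"
  assumes [measurable]: "nu \<in> borel_measurable lborel"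
  shows "Mom nu k th (Suc (Suc n)) = Mom nu k th 1 * Mom nu k th (Suc n)"
proof -
  note [measurable] = conv_pow_meas_Suc[OF assms(1)]
  have "Mom nu k th (Suc (Suc n)) = (\<integral>\<^sup>+ z. ennreal (exp (k * (th \<bullet> z))) * conv_pow nu (Suc (Suc n)) z * 1 \<partial>lborel)"
    by (simp add: Mom_def)
  also have "\<dots> = (\<integral>\<^sup>+ y. conv_pow nu (Suc n) y * (\<integral>\<^sup>+ w. ennreal (exp (k * (th \<bullet> (w + y)))) * ennreal (nu w) * 1 \<partial>lborel) \<partial>lborel)"
    by (rule conv_key) auto
  also have "\<dots> = (\<integral>\<^sup>+ y. Mom nu k th 1 * (ennreal (exp (k * (th \<bullet> y))) * conv_pow nu (Suc n) y) \<partial>lborel)"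
  proof (rule nn_integral_cong)
    fix y :: 'a
    have "(\<integral>\<^sup>+ w. ennreal (exp (k * (th \<bullet> (w + y)))) * ennreal (nu w) * 1 \<partial>lborel)
       = (\<integral>\<^sup>+ w. ennreal (exp (k * (th \<bullet> y))) * (ennreal (exp (k * (th \<bullet> w))) * ennreal (nu w)) \<partial>lborel)"
      by (simp add: exp_split mult_ac)
    also have "\<dots> = ennreal (exp (k * (th \<bullet> y))) * Mom nu k th 1"
      by (subst nn_integral_cmult) (auto simp: Mom_def)
    finally show "conv_pow nu (Suc n) y * (\<integral>\<^sup>+ w. ennreal (exp (k * (th \<bullet> (w + y)))) * ennreal (nu w) * 1 \<partial>lborel) = Mom nu k th 1 * (ennreal (exp (k * (th \<bullet> y))) * conv_pow nu (Suc n) y)"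
      by (simp add: mult_ac)
  qed
  also have "\<dots> = Mom nu k th 1 * Mom nu k th (Suc n)"
    by (subst nn_integral_cmult) (auto simp: Mom_def)
  finally show ?thesis .
qed

lemma ind_split:
  fixes w y :: "'a::real_normed_vector"
  shows "indicator {z. norm z > R} (w + y) \<le> (indicator {z. norm z > R/2} w + indicator {z. norm z > R/2} y :: ennreal)"
proof -
  have "norm (w + y) > R \<Longrightarrow> norm w > R/2 \<or> norm y > R/2"
    using norm_triangle_ineq[of w y] by linarith
  then show ?thesis by (auto simp: indicator_def)
qed

lemma Tl_rec:
  fixes nu :: "'a::euclidean_space \<Rightarrow> real"
  assumes [measurable]: "nu \<in> borel_measurable lborel"
  shows "Tl nu k th (Suc (Suc n)) R \<le> Tl nu k th 1 (R/2) * Mom nu k th (Suc n) + Mom nu k th 1 * Tl nu k th (Suc n) (R/2)"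
proof -
  note [measurable] = conv_pow_meas_Suc[OF assms(1)]
  let ?e = "\<lambda>z. ennreal (exp (k * (th \<bullet> z)))"
  let ?I = "\<lambda>r z. indicator {z::'a. norm z > r} z :: ennreal"
  have "Tl nu k th (Suc (Suc n)) R = (\<integral>\<^sup>+ z. ?e z * conv_pow nu (Suc (Suc n)) z * ?I R z \<partial>lborel)"
    by (simp add: Tl_def)
  also have "\<dots> = (\<integral>\<^sup>+ y. conv_pow nu (Suc n) y * (\<integral>\<^sup>+ w. ?e (w + y) * ennreal (nu w) * ?I R (w + y) \<partial>lborel) \<partial>lborel)"
    by (rule conv_key) auto
  also have "\<dots> \<le> (\<integral>\<^sup>+ y. conv_pow nu (Suc n) y * (?e y * (Tl nu k th 1 (R/2) + ?I (R/2) y * Mom nu k th 1)) \<partial>lborel)"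
  proof (rule nn_integral_mono)
    fix y :: 'a
    have "(\<integral>\<^sup>+ w. ?e (w + y) * ennreal (nu w) * ?I R (w + y) \<partial>lborel)
       \<le> (\<integral>\<^sup>+ w. ?e y * (?e w * ennreal (nu w) * ?I (R/2) w) + ?e y * ?I (R/2) y * (?e w * ennreal (nu w)) \<partial>lborel)"
    proof (rule nn_integral_mono)
      fix w :: 'a
      have "?e (w + y) * ennreal (nu w) * ?I R (w + y) \<le> ?e (w + y) * ennreal (nu w) * (?I (R/2) w + ?I (R/2) y)"
        by (intro mult_left_mono ind_split) auto
      then show "?e (w + y) * ennreal (nu w) * ?I R (w + y) \<le> ?e y * (?e w * ennreal (nu w) * ?I (R/2) w) + ?e y * ?I (R/2) y * (?e w * ennreal (nu w))"
        by (simp add: exp_split distrib_left mult_ac)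
    qed
    also have "\<dots> = ?e y * (\<integral>\<^sup>+ w. ?e w * ennreal (nu w) * ?I (R/2) w \<partial>lborel) + ?e y * ?I (R/2) y * (\<integral>\<^sup>+ w. ?e w * ennreal (nu w) \<partial>lborel)"
      by (subst nn_integral_add) (auto simp: nn_integral_cmult)
    also have "\<dots> = ?e y * (Tl nu k th 1 (R/2) + ?I (R/2) y * Mom nu k th 1)"
      by (simp add: Tl_def Mom_def distrib_left mult_ac)
    finally show "conv_pow nu (Suc n) y * (\<integral>\<^sup>+ w. ?e (w + y) * ennreal (nu w) * ?I R (w + y) \<partial>lborel) \<le> conv_pow nu (Suc n) y * (?e y * (Tl nu k th 1 (R/2) + ?I (R/2) y * Mom nu k th 1))"
      by (intro mult_left_mono) auto
  qed
  also have "\<dots> = (\<integral>\<^sup>+ y. Tl nu k th 1 (R/2) * (?e y * conv_pow nu (Suc n) y) + Mom nu k th 1 * (?e y * conv_pow nu (Suc n) y * ?I (R/2) y) \<partial>lborel)"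
    by (rule nn_integral_cong) (simp add: distrib_left mult_ac)
  also have "\<dots> = Tl nu k th 1 (R/2) * Mom nu k th (Suc n) + Mom nu k th 1 * Tl nu k th (Suc n) (R/2)"
    by (subst nn_integral_add) (auto simp: nn_integral_cmult Tl_def Mom_def)
  finally show ?thesis .
qed


lemma hyper_null:
  fixes b :: "'a::euclidean_space"
  assumes "b \<noteq> 0"
  shows "{y. b \<bullet> y = c} \<in> null_sets lborel"
proof -
  have "negligible {y. b \<bullet> y = c}" using negligible_hyperplane assms by blast
  then have "{y. b \<bullet> y = c} \<in> null_sets lebesgue" using negligible_iff_null_sets by blast
  moreover have "{y. b \<bullet> y = c} \<in> sets lborel" by measurable
  ultimately show ?thesis using null_sets_completion_iff by blast
qed

lemma cos_null:
  fixes b :: "'a::euclidean_space"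
  assumes "b \<noteq> 0"
  shows "AE y in lborel. cos (b \<bullet> y) \<noteq> 1"
proof (rule AE_I')
  show "(\<Union>k\<in>(UNIV::int set). {y. b \<bullet> y = real_of_int k * 2 * pi}) \<in> null_sets lborel"
    by (rule null_sets_UN') (simp_all add: hyper_null assms)
  show "{y \<in> space lborel. \<not> cos (b \<bullet> y) \<noteq> 1} \<subseteq> (\<Union>k\<in>(UNIV::int set). {y. b \<bullet> y = real_of_int k * 2 * pi})"
    by (auto simp: cos_one_2pi_int)
qed

lemma psi_zero:
  fixes nu :: "'a::euclidean_space \<Rightarrow> real"
  assumes nu_nonneg: "\<And>x. nu x \<ge> 0"
    and nu_meas[measurable]: "nu \<in> borel_measurable lborel"
    and finite_nu: "(\<integral>\<^sup>+ y. ennreal (nu y) \<partial>lborel) < \<infinity>"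
    and psi: "Psi_inf nu \<le> 0"
  shows "(\<integral>\<^sup>+ y. ennreal (nu y) \<partial>lborel) = 0"
proof -
  have [measurable]: "nu \<in> borel_measurable borel" using nu_meas by simp
  have [measurable]: "ball (0::'a) 1 \<in> sets borel" by simp
  have int_nu: "integrable lborel nu"
    using finite_nu nu_nonneg by (intro integrableI_bounded) auto
  define F where "F \<xi> y = (1 - exp (\<i> * complex_of_real (\<xi> \<bullet> y))
         + \<i> * complex_of_real (\<xi> \<bullet> y) * complex_of_real (indicator (ball 0 1) y))
      * complex_of_real (nu y)" for \<xi> y :: 'a
  have intF: "integrable lborel (F \<xi>)" for \<xi>
  proof (rule Bochner_Integration.integrable_bound[where f="\<lambda>y. (2 + norm \<xi>) * nu y"])
    show "integrable lborel (\<lambda>y. (2 + norm \<xi>) * nu y)" using int_nu by simp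
    show "F \<xi> \<in> borel_measurable lborel" unfolding F_def by measurable
    show "AE y in lborel. norm (F \<xi> y) \<le> norm ((2 + norm \<xi>) * nu y)"
    proof (rule AE_I2)
      fix y :: 'a
      have n1: "norm (exp (\<i> * complex_of_real (\<xi> \<bullet> y))) = 1" by (simp add: norm_exp_i_times)
      have n2: "norm (\<i> * complex_of_real (\<xi> \<bullet> y) * complex_of_real (indicator (ball 0 1) y)) \<le> norm \<xi>"
      proof (cases "y \<in> ball 0 1")
        case True
        then have "\<bar>\<xi> \<bullet> y\<bar> \<le> norm \<xi> * norm y" using Cauchy_Schwarz_ineq2 by blast
        also have "\<dots> \<le> norm \<xi>" using True by (simp add: mult_left_le)
        finally show ?thesis using True by (simp add: norm_mult)
      qed simp
      have "norm (1 - exp (\<i> * complex_of_real (\<xi> \<bullet> y)) + \<i> * complex_of_real (\<xi> \<bullet> y) * complex_of_real (indicator (ball 0 1) y)) \<le> 2 + norm \<xi>"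
        using norm_triangle_ineq[of "1 - exp (\<i> * complex_of_real (\<xi> \<bullet> y))"] norm_triangle_ineq4[of 1 "exp (\<i> * complex_of_real (\<xi> \<bullet> y))"] n1 n2
        by (smt (verit) norm_one)
      then show "norm (F \<xi> y) \<le> norm ((2 + norm \<xi>) * nu y)"
        unfolding F_def using nu_nonneg[of y] by (simp add: norm_mult mult_right_mono)
    qed
  qed
  have ReF: "Re (Phi nu \<xi>) = (\<integral>y. (1 - cos (\<xi> \<bullet> y)) * nu y \<partial>lborel)" for \<xi>
  proof -
    have "Re (Phi nu \<xi>) = (\<integral>y. Re (F \<xi> y) \<partial>lborel)"
      unfolding Phi_def F_def[symmetric] using integral_bounded_linear[OF bounded_linear_Re intF] by simp
    also have "\<dots> = (\<integral>y. (1 - cos (\<xi> \<bullet> y)) * nu y \<partial>lborel)"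
      by (rule Bochner_Integration.integral_cong) (auto simp: F_def Re_exp)
    finally show ?thesis .
  qed
  define S where "S = {Re (Phi nu \<xi>) | \<xi>. True}"
  have Sne: "S \<noteq> {}" by (auto simp: S_def)
  have Sbdd: "bdd_above S"
  proof (rule bdd_aboveI[of _ "2 * integral\<^sup>L lborel nu"])
    fix s assume "s \<in> S"
    then obtain \<xi> where s: "s = Re (Phi nu \<xi>)" by (auto simp: S_def)
    have "(\<integral>y. (1 - cos (\<xi> \<bullet> y)) * nu y \<partial>lborel) \<le> (\<integral>y. 2 * nu y \<partial>lborel)"
    proof (rule integral_mono)
      show "integrable lborel (\<lambda>y. (1 - cos (\<xi> \<bullet> y)) * nu y)"
        using integrable_Re[OF intF[of \<xi>]] by (simp add: F_def Re_exp)
      show "integrable lborel (\<lambda>y. 2 * nu y)" using int_nu by simp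
      fix y show "(1 - cos (\<xi> \<bullet> y)) * nu y \<le> 2 * nu y"
        using nu_nonneg[of y] cos_ge_minus_one[of "\<xi> \<bullet> y"] by (intro mult_right_mono) auto
    qed
    then show "s \<le> 2 * integral\<^sup>L lborel nu" using s ReF by simp
  qed
  have Psi_le: "Psi nu r \<le> Sup S" if r: "r \<ge> 0" for r
  proof -
    have ne: "{Re (Phi nu \<xi>) | \<xi>::'a. norm \<xi> \<le> r} \<noteq> {}" using r by (auto intro!: exI[of _ 0])
    show ?thesis unfolding Psi_def
      by (rule cSup_subset_mono[OF ne Sbdd]) (auto simp: S_def)
  qed
  have Psi_ge: "Re (Phi nu \<xi>) \<le> Psi nu r" if r: "norm \<xi> \<le> r" for r \<xi>
  proof -
    have "bdd_above {Re (Phi nu \<xi>) | \<xi>::'a. norm \<xi> \<le> r}"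
      using Sbdd by (rule bdd_above_mono) (auto simp: S_def)
    then show ?thesis unfolding Psi_def
      by (rule cSup_upper[rotated]) (use r in auto)
  qed
  have lim: "(Psi nu \<longlongrightarrow> Sup S) at_top"
  proof (rule increasing_tendsto)
    show "eventually (\<lambda>r. Psi nu r \<le> Sup S) at_top"
      using eventually_ge_at_top[of 0] by eventually_elim (rule Psi_le)
    fix x assume "x < Sup S"
    then obtain s where "s \<in> S" "x < s" using less_cSup_iff[OF Sne Sbdd] by blast
    then obtain \<xi> where xs: "x < Re (Phi nu \<xi>)" by (auto simp: S_def)
    show "eventually (\<lambda>r. x < Psi nu r) at_top"
      using eventually_ge_at_top[of "norm \<xi>"] by eventually_elim (use xs Psi_ge in fastforce)
  qed
  have PsiS: "Psi_inf nu = Sup S"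
    unfolding Psi_inf_def using lim by (rule tendsto_Lim[rotated]) simp
  obtain b :: 'a where b: "b \<in> Basis" using nonempty_Basis by blast
  have b0: "b \<noteq> 0" using b by auto
  have "Re (Phi nu b) \<le> Sup S" by (rule cSup_upper[OF _ Sbdd]) (auto simp: S_def)
  then have le0: "(\<integral>y. (1 - cos (b \<bullet> y)) * nu y \<partial>lborel) \<le> 0" using psi PsiS ReF by simp
  have nn: "AE y in lborel. 0 \<le> (1 - cos (b \<bullet> y)) * nu y"
    using nu_nonneg cos_le_one by (intro AE_I2 mult_nonneg_nonneg) auto
  have intb: "integrable lborel (\<lambda>y. (1 - cos (b \<bullet> y)) * nu y)"
    using integrable_Re[OF intF[of b]] by (simp add: F_def Re_exp)
  have "(\<integral>y. (1 - cos (b \<bullet> y)) * nu y \<partial>lborel) = 0"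
    using le0 integral_nonneg_AE[OF nn] by linarith
  then have ae0: "AE y in lborel. (1 - cos (b \<bullet> y)) * nu y = 0"
    using integral_nonneg_eq_0_iff_AE[OF intb nn] by simp
  have "AE y in lborel. nu y = 0"
    using ae0 cos_null[OF b0] by eventually_elim auto
  then have "AE y in lborel. ennreal (nu y) = 0" by eventually_elim simp
  then show ?thesis by (subst nn_integral_0_iff_AE) auto
qed


locale cor4loc =
  fixes nu :: "'a::euclidean_space \<Rightarrow> real"
    and f :: "real \<Rightarrow> real"
    and E :: "'a set"
    and C0 \<kappa> :: real
  assumes nu_nonneg: "\<And>x. nu x \<ge> 0"
    and nu_meas: "nu \<in> borel_measurable lborel"
    and f_pos: "\<And>r. r > 0 \<Longrightarrow> f r > 0"
    and f_mono: "\<And>r s. 0 < r \<Longrightarrow> r \<le> s \<Longrightarrow> f s \<le> f r"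
    and C0_pos: "C0 > 0"
    and nu_le: "\<And>x. x \<noteq> 0 \<Longrightarrow> nu x \<le> C0 * f (norm x)"
    and E_sphere: "E \<subseteq> sphere 0 1"
    and kappa_nonneg: "\<kappa> \<ge> 0"
    and nu_ratio: "\<And>\<theta> y. \<theta> \<in> E \<Longrightarrow>
           ((\<lambda>r. nu (r *\<^sub>R \<theta> - y) / nu (r *\<^sub>R \<theta>)) \<longlongrightarrow> exp (\<kappa> * (\<theta> \<bullet> y))) at_top"
    and C1_pos: "Inf {nu x / f (norm x) | x. x \<in> Gamma_cone E} > 0"
begin

lemma f_norm_meas: "(\<lambda>x::'a. f (norm x)) \<in> borel_measurable borel"
proof -
  define h where "h t = - f (if t \<le> 0 then 0 else t)" for t
  have "h \<in> borel_measurable borel"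
    by (rule borel_measurable_piecewise_mono[of "{{0<..},{..0}}"])
      (auto simp: mono_on_def h_def intro: f_mono)
  then have "(\<lambda>x::'a. - h (norm x)) \<in> borel_measurable borel" by measurable
  moreover have "(\<lambda>x::'a. - h (norm x)) = (\<lambda>x. f (norm x))"
    by (rule ext) (auto simp: h_def)
  ultimately show ?thesis by simp
qed

lemma f_norm_meas': "(\<lambda>x::'a. f (norm (c - x))) \<in> borel_measurable borel"
  using measurable_compose[OF _ f_norm_meas, of "\<lambda>x. c - x" borel] by simp

lemma nu_lower:
  assumes th: "th \<in> E" and m: "m > 0"
  shows "Inf {nu x / f (norm x) | x. x \<in> Gamma_cone E} * f m \<le> nu (m *\<^sub>R th)"
proof -
  let ?S = "{nu x / f (norm x) | x. x \<in> Gamma_cone E}"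
  have nth: "norm th = 1" using th E_sphere by auto
  have nx: "norm (m *\<^sub>R th) = m" using m nth by simp
  have "m *\<^sub>R th \<in> Gamma_cone E"
    unfolding Gamma_cone_def using nx m nth th by auto
  then have mem: "nu (m *\<^sub>R th) / f m \<in> ?S" using nx by force
  have "bdd_below ?S"
  proof (rule bdd_belowI[of _ 0])
    fix s assume "s \<in> ?S"
    then obtain x where "s = nu x / f (norm x)" "x \<in> Gamma_cone E" by auto
    then show "0 \<le> s" using nu_nonneg f_pos[of "norm x"] by (auto simp: Gamma_cone_def)
  qed
  then have "Inf ?S \<le> nu (m *\<^sub>R th) / f m" using mem by (rule cInf_lower[rotated])
  then show ?thesis using f_pos[OF m] by (simp add: pos_le_divide_eq)
qed

lemma nu_pos_ray:
  assumes th: "th \<in> E" and m: "m > 0"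
  shows "nu (m *\<^sub>R th) > 0"
  using nu_lower[OF th m] C1_pos f_pos[OF m] by (smt (verit) mult_pos_pos)

lemma tail1:
  assumes th: "th \<in> E" and r: "r > 0"
  shows "(\<integral>\<^sup>+ y. ennreal (exp (\<kappa> * (th \<bullet> y))) * ennreal (nu y) * indicator {y. norm y > r} y \<partial>lborel)
     \<le> ennreal (C0^2 / Inf {nu x / f (norm x) | x. x \<in> Gamma_cone E}) * K_fun TYPE('a) f r"
proof -
  define C1 where "C1 = Inf {nu x / f (norm x) | x. x \<in> Gamma_cone E}"
  have C1p: "C1 > 0" using C1_pos by (simp add: C1_def)
  have nth: "norm th = 1" using th E_sphere by auto
  note [measurable] = nu_meas
  define u where "u m y = ennreal (nu (real m *\<^sub>R th - y) * nu y / nu (real m *\<^sub>R th))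
       * indicator {y. norm (real m *\<^sub>R th - y) > r \<and> norm y > r} y" for m y
  have umeas: "u m \<in> borel_measurable lborel" for m
    unfolding u_def by measurable
  have pw: "ennreal (exp (\<kappa> * (th \<bullet> y))) * ennreal (nu y) * indicator {y. norm y > r} y = liminf (\<lambda>m. u m y)" for y
  proof (cases "norm y > r")
    case False
    then show ?thesis by (simp add: u_def Liminf_const)
  next
    case True
    have lim1: "((\<lambda>m. nu (real m *\<^sub>R th - y) / nu (real m *\<^sub>R th)) \<longlongrightarrow> exp (\<kappa> * (th \<bullet> y))) sequentially"
      using filterlim_compose[OF nu_ratio[OF th] filterlim_real_sequentially] by simp
    have ev: "eventually (\<lambda>m. u m y = ennreal (nu (real m *\<^sub>R th - y) / nu (real m *\<^sub>R th) * nu y)) sequentially"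
    proof -
      obtain N :: nat where N: "real N > r + norm y" using reals_Archimedean2 by blast
      show ?thesis
      proof (rule eventually_sequentiallyI[of N])
        fix m assume "N \<le> m"
        then have "real m > r + norm y" using N by (meson le_less_trans of_nat_le_iff not_le order_less_le_trans)
        moreover have "norm (real m *\<^sub>R th - y) \<ge> real m - norm y"
          using norm_triangle_ineq2[of "real m *\<^sub>R th" y] nth by simp
        ultimately have "norm (real m *\<^sub>R th - y) > r" by linarith
        then show "u m y = ennreal (nu (real m *\<^sub>R th - y) / nu (real m *\<^sub>R th) * nu y)"
          using True by (simp add: u_def indicator_def)
      qed
    qed
    have "((\<lambda>m. u m y) \<longlongrightarrow> ennreal (exp (\<kappa> * (th \<bullet> y)) * nu y)) sequentially"
      by (rule tendsto_cong[OF ev, THEN iffD2]) (intro tendsto_ennrealI tendsto_mult lim1 tendsto_const)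
    then have "liminf (\<lambda>m. u m y) = ennreal (exp (\<kappa> * (th \<bullet> y)) * nu y)"
      by (intro lim_imp_Liminf) auto
    then show ?thesis using True by (simp add: ennreal_mult nu_nonneg)
  qed
  have bnd: "(\<integral>\<^sup>+ y. u m y \<partial>lborel) \<le> ennreal (C0^2 / C1) * K_fun TYPE('a) f r" if m2: "m \<ge> 2" for m
  proof -
    let ?x = "real m *\<^sub>R th"
    have mpos: "real m > 0" using m2 by simp
    have nx: "norm ?x = real m" using nth by simp
    have nupos: "nu ?x > 0" using nu_pos_ray[OF th mpos] .
    have low: "C1 * f (real m) \<le> nu ?x" using nu_lower[OF th mpos] by (simp add: C1_def)
    have fm: "f (real m) > 0" using f_pos mpos by simp
    define I where "I = (\<integral>\<^sup>+ y. indicator {y. norm (?x - y) > r \<and> norm y > r} y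
               * ennreal (f (norm (?x - y)) * f (norm y)) \<partial>(lborel :: 'a measure))"
    have "(\<integral>\<^sup>+ y. u m y \<partial>lborel) \<le> (\<integral>\<^sup>+ y. ennreal (C0^2 / nu ?x) * (indicator {y. norm (?x - y) > r \<and> norm y > r} y
               * ennreal (f (norm (?x - y)) * f (norm y))) \<partial>lborel)"
    proof (rule nn_integral_mono)
      fix y
      show "u m y \<le> ennreal (C0^2 / nu ?x) * (indicator {y. norm (?x - y) > r \<and> norm y > r} y
               * ennreal (f (norm (?x - y)) * f (norm y)))"
      proof (cases "norm (?x - y) > r \<and> norm y > r")
        case False then show ?thesis by (simp add: u_def)
      next
        case True
        then have y0: "y \<noteq> 0" "?x - y \<noteq> 0" using r by auto
        have a: "nu (?x - y) \<le> C0 * f (norm (?x - y))" using nu_le[OF y0(2)] .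
        have b: "nu y \<le> C0 * f (norm y)" using nu_le[OF y0(1)] .
        have "nu (?x - y) * nu y \<le> (C0 * f (norm (?x - y))) * (C0 * f (norm y))"
          by (intro mult_mono a b) (auto simp: nu_nonneg intro: order_trans[OF nu_nonneg a])
        then have "nu (?x - y) * nu y / nu ?x \<le> C0^2 / nu ?x * (f (norm (?x - y)) * f (norm y))"
          using nupos by (simp add: divide_right_mono power2_eq_square mult_ac)
        moreover have ff0: "f (norm (?x - y)) * f (norm y) \<ge> 0"
          using f_pos[of "norm (?x - y)"] f_pos[of "norm y"] True r by (smt (verit) mult_nonneg_nonneg)
        moreover have "ennreal (C0^2 / nu ?x) * ennreal (f (norm (?x - y)) * f (norm y))
            = ennreal (C0^2 / nu ?x * (f (norm (?x - y)) * f (norm y)))"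
          using ff0 nupos by (subst ennreal_mult[symmetric]) auto
        ultimately show ?thesis using True nupos
          by (simp add: u_def ennreal_leI)
      qed
    qed
    also have "\<dots> = ennreal (C0^2 / nu ?x) * I"
    proof -
      have [measurable]: "(\<lambda>x::'a. f (norm x)) \<in> borel_measurable borel" "(\<lambda>x::'a. f (norm (?x - x))) \<in> borel_measurable borel"
        using f_norm_meas f_norm_meas' by auto
      show ?thesis unfolding I_def by (rule nn_integral_cmult) measurable
    qed
    also have "I \<le> ennreal (f (real m)) * K_fun TYPE('a) f r"
    proof -
      have "ennreal (1 / f (norm ?x)) * I \<le> K_fun TYPE('a) f r"
        unfolding K_fun_def I_def by (rule SUP_upper[where f="\<lambda>x. ennreal (1 / f (norm x)) *
           (\<integral>\<^sup>+ y. indicator {y. norm (x - y) > r \<and> norm y > r} y * ennreal (f (norm (x - y)) * f (norm y)) \<partial>(lborel :: 'a measure))"])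
          (use nx m2 in auto)
      then have "ennreal (f (real m)) * (ennreal (1 / f (real m)) * I) \<le> ennreal (f (real m)) * K_fun TYPE('a) f r"
        using nth by (intro mult_left_mono) auto
      moreover have "ennreal (f (real m)) * (ennreal (1 / f (real m)) * I) = I"
        using fm by (simp add: mult.assoc[symmetric] ennreal_mult[symmetric])
      ultimately show ?thesis by simp
    qed
    then have "ennreal (C0^2 / nu ?x) * I \<le> ennreal (C0^2 / nu ?x) * (ennreal (f (real m)) * K_fun TYPE('a) f r)"
      by (rule mult_left_mono) simp
    also have "\<dots> = ennreal (C0^2 / nu ?x * f (real m)) * K_fun TYPE('a) f r"
      using nupos fm by (subst ennreal_mult) (auto simp: mult.assoc)
    also have "\<dots> \<le> ennreal (C0^2 / C1) * K_fun TYPE('a) f r"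
    proof (intro mult_right_mono ennreal_leI)
      have "C0^2 / nu ?x * f (real m) = C0^2 * (f (real m) / nu ?x)" by simp
      also have "\<dots> \<le> C0^2 * (1 / C1)"
        using low C1p nupos fm by (intro mult_left_mono) (auto simp: divide_simps mult.commute)
      finally show "C0^2 / nu ?x * f (real m) \<le> C0^2 / C1" by simp
    qed simp
    finally show ?thesis .
  qed
  have "(\<integral>\<^sup>+ y. ennreal (exp (\<kappa> * (th \<bullet> y))) * ennreal (nu y) * indicator {y. norm y > r} y \<partial>lborel)
      = (\<integral>\<^sup>+ y. liminf (\<lambda>m. u m y) \<partial>lborel)"
    using pw by simp
  also have "\<dots> \<le> liminf (\<lambda>m. \<integral>\<^sup>+ y. u m y \<partial>lborel)"
    by (rule nn_integral_liminf) (rule umeas)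
  also have "\<dots> \<le> limsup (\<lambda>m. \<integral>\<^sup>+ y. u m y \<partial>lborel)"
    by (rule Liminf_le_Limsup) simp
  also have "\<dots> \<le> ennreal (C0^2 / C1) * K_fun TYPE('a) f r"
    by (rule Limsup_bounded) (rule eventually_sequentiallyI[of 2], rule bnd)
  finally show ?thesis by (simp add: C1_def)
qed


lemma mom1:
  assumes th: "th \<in> E" and r: "r > 0"
  shows "Mom nu \<kappa> th 1 \<le> ennreal (exp (\<kappa> * r)) * (\<integral>\<^sup>+ y. ennreal (nu y) \<partial>lborel)
     + ennreal (C0^2 / Inf {nu x / f (norm x) | x. x \<in> Gamma_cone E}) * K_fun TYPE('a) f r"
proof -
  note [measurable] = nu_meas
  have nth: "norm th = 1" using th E_sphere by auto
  have "Mom nu \<kappa> th 1 = (\<integral>\<^sup>+ y. ennreal (exp (\<kappa> * (th \<bullet> y))) * ennreal (nu y) \<partial>lborel)"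
    by (simp add: Mom_def)
  also have "\<dots> \<le> (\<integral>\<^sup>+ y. ennreal (exp (\<kappa> * r)) * ennreal (nu y)
      + ennreal (exp (\<kappa> * (th \<bullet> y))) * ennreal (nu y) * indicator {y. norm y > r} y \<partial>lborel)"
  proof (rule nn_integral_mono)
    fix y :: 'a
    show "ennreal (exp (\<kappa> * (th \<bullet> y))) * ennreal (nu y) \<le> ennreal (exp (\<kappa> * r)) * ennreal (nu y)
      + ennreal (exp (\<kappa> * (th \<bullet> y))) * ennreal (nu y) * indicator {y. norm y > r} y"
    proof (cases "norm y > r")
      case True then show ?thesis by simp
    next
      case False
      have "th \<bullet> y \<le> norm th * norm y" by (rule norm_cauchy_schwarz)
      then have "th \<bullet> y \<le> r" using False nth by simp
      then have "exp (\<kappa> * (th \<bullet> y)) \<le> exp (\<kappa> * r)" using kappa_nonneg by (simp add: mult_left_mono)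
      then have "ennreal (exp (\<kappa> * (th \<bullet> y))) * ennreal (nu y) \<le> ennreal (exp (\<kappa> * r)) * ennreal (nu y)"
        by (intro mult_right_mono ennreal_leI) auto
      then show ?thesis using False by simp
    qed
  qed
  also have "\<dots> = ennreal (exp (\<kappa> * r)) * (\<integral>\<^sup>+ y. ennreal (nu y) \<partial>lborel)
      + (\<integral>\<^sup>+ y. ennreal (exp (\<kappa> * (th \<bullet> y))) * ennreal (nu y) * indicator {y. norm y > r} y \<partial>lborel)"
    by (subst nn_integral_add) (auto simp: nn_integral_cmult)
  also have "\<dots> \<le> ennreal (exp (\<kappa> * r)) * (\<integral>\<^sup>+ y. ennreal (nu y) \<partial>lborel)
     + ennreal (C0^2 / Inf {nu x / f (norm x) | x. x \<in> Gamma_cone E}) * K_fun TYPE('a) f r"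
    by (intro add_left_mono tail1 th r)
  finally show ?thesis .
qed

end


theorem corollary4:
  fixes nu :: "'a::euclidean_space \<Rightarrow> real"
    and f :: "real \<Rightarrow> real"
    and E :: "'a set"
    and C0 \<kappa> :: real
  assumes nu_nonneg: "\<And>x. nu x \<ge> 0"
    and nu_meas: "nu \<in> borel_measurable lborel"
    and levy: "(\<integral>\<^sup>+ y. ennreal (min 1 (norm y ^ 2) * nu y) \<partial>lborel) < \<infinity>"
    and finite_nu: "(\<integral>\<^sup>+ y. ennreal (nu y) \<partial>lborel) < \<infinity>"
    \<comment> \<open>condition (B)\<close>
    and f_pos: "\<And>r. r > 0 \<Longrightarrow> f r > 0"
    and f_mono: "\<And>r s. 0 < r \<Longrightarrow> r \<le> s \<Longrightarrow> f s \<le> f r"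
    and C0_pos: "C0 > 0"
    and nu_le: "\<And>x. x \<noteq> 0 \<Longrightarrow> nu x \<le> C0 * f (norm x)"
    and liminf_pos: "Liminf (at_right 0) (\<lambda>r.
           enn2ereal (\<integral>\<^sup>+ x\<in>{x. norm x > r}. ennreal (nu x) \<partial>lborel)
           / ereal (f r * r ^ DIM('a))) > 0"
    and K_mono: "\<And>r s. 0 < r \<Longrightarrow> r \<le> s \<Longrightarrow> K_fun TYPE('a) f s \<le> K_fun TYPE('a) f r"
    and K_lim: "(K_fun TYPE('a) f \<longlongrightarrow> 0) at_top"
    \<comment> \<open>condition (C)\<close>
    and E_sphere: "E \<subseteq> sphere 0 1"
    and kappa_nonneg: "\<kappa> \<ge> 0"
    and nu_ratio: "\<And>\<theta> y. \<theta> \<in> E \<Longrightarrow>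
           ((\<lambda>r. nu (r *\<^sub>R \<theta> - y) / nu (r *\<^sub>R \<theta>)) \<longlongrightarrow> exp (\<kappa> * (\<theta> \<bullet> y))) at_top"
    and C1_pos: "Inf {nu x / f (norm x) | x. x \<in> Gamma_cone E} > 0"
  shows "\<exists>C17 > 0.
           (\<forall>\<theta>\<in>E. \<forall>n\<ge>1.
              (\<integral>\<^sup>+ z. ennreal (exp (\<kappa> * (\<theta> \<bullet> z))) * conv_pow nu n z \<partial>lborel)
              \<le> ennreal ((C0 / Inf {nu x / f (norm x) | x. x \<in> Gamma_cone E})
                         * (C17 * Psi_inf nu) ^ n))
         \<and> (\<forall>n\<ge>1. ((\<lambda>R. SUP \<theta>\<in>E.
              \<integral>\<^sup>+ z\<in>{z. norm z > R}. ennreal (exp (\<kappa> * (\<theta> \<bullet> z))) * conv_pow nu n z \<partial>lborel)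
              \<longlongrightarrow> 0) at_top)"
proof -
  define C1 where "C1 = Inf {nu x / f (norm x) | x. x \<in> Gamma_cone E}"
  have C1p: "C1 > 0" using C1_pos by (simp add: C1_def)
  note [measurable] = nu_meas
  interpret L: cor4loc nu f E C0 \<kappa>
    by (unfold_locales) (fact nu_nonneg nu_meas f_pos f_mono C0_pos nu_le E_sphere kappa_nonneg nu_ratio C1_pos)+
  note tail1' = L.tail1
  note mom1' = L.mom1
  define N where "N = (\<integral>\<^sup>+ y. ennreal (nu y) \<partial>lborel)"
  have "eventually (\<lambda>r. K_fun TYPE('a) f r < 1 \<and> r > 0) at_top"
  proof -
    have "eventually (\<lambda>r. K_fun TYPE('a) f r < 1) at_top"
      by (rule order_tendstoD(2)[OF K_lim]) simp
    then show ?thesis using eventually_gt_at_top[of 0] by eventually_elim auto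
  qed
  then obtain r0 where r0: "K_fun TYPE('a) f r0 < 1" "r0 > 0"
    by (auto simp: eventually_at_top_linorder)
  define B where "B = ennreal (exp (\<kappa> * r0)) * N + ennreal (C0^2 / C1)"
  have Bfin: "B < top" using finite_nu by (simp add: B_def N_def ennreal_mult_less_top)
  have Bpow: "B ^ k < top" for k
  proof -
    have "B = ennreal (enn2real B)" using Bfin by simp
    then have "B ^ k = ennreal (enn2real B ^ k)" by (metis ennreal_power enn2real_nonneg)
    then show ?thesis by simp
  qed
  have M1: "Mom nu \<kappa> th 1 \<le> B" if th: "th \<in> E" for th
  proof -
    have "Mom nu \<kappa> th 1 \<le> ennreal (exp (\<kappa> * r0)) * N + ennreal (C0^2 / C1) * K_fun TYPE('a) f r0"
      using mom1'[OF th r0(2)] by (simp add: N_def C1_def)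
    also have "\<dots> \<le> B" unfolding B_def
    proof (intro add_left_mono)
      have "ennreal (C0^2 / C1) * K_fun TYPE('a) f r0 \<le> ennreal (C0^2 / C1) * 1"
        using r0(1) by (intro mult_left_mono) auto
      then show "ennreal (C0^2 / C1) * K_fun TYPE('a) f r0 \<le> ennreal (C0^2 / C1)" by simp
    qed
    finally show ?thesis .
  qed
  have Mn: "Mom nu \<kappa> th (Suc n) = Mom nu \<kappa> th 1 ^ Suc n" for th n
  proof (induction n)
    case 0 then show ?case by simp
  next
    case (Suc n)
    then show ?case using Mom_mult[OF nu_meas, of \<kappa> th n] by (simp add: mult_ac)
  qed
  have MnB: "Mom nu \<kappa> th n \<le> B ^ n" if th: "th \<in> E" and n1: "n \<ge> 1" for th n
  proof -
    obtain m where m: "n = Suc m" using n1 by (cases n) auto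
    show ?thesis unfolding m Mn by (intro power_mono M1 th) simp
  qed
  have part1: "\<exists>C17 > 0. \<forall>\<theta>\<in>E. \<forall>n\<ge>1. Mom nu \<kappa> \<theta> n \<le> ennreal ((C0 / C1) * (C17 * Psi_inf nu) ^ n)"
  proof (cases "Psi_inf nu > 0")
    case False
    then have N0: "N = 0" unfolding N_def using psi_zero[OF nu_nonneg nu_meas finite_nu] by simp
    then have "AE y in lborel. ennreal (nu y) = 0" unfolding N_def by (subst (asm) nn_integral_0_iff_AE) auto
    then have "AE y in lborel. ennreal (exp (\<kappa> * (th \<bullet> y))) * ennreal (nu y) = 0" for th
      by eventually_elim simp
    then have M10: "Mom nu \<kappa> th 1 = 0" for th
      unfolding Mom_def by (subst nn_integral_0_iff_AE) auto
    show ?thesis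
    proof (intro exI[of _ 1] conjI ballI allI impI)
      fix th n assume "th \<in> E" "(n::nat) \<ge> 1"
      then obtain m where m: "n = Suc m" by (cases n) auto
      show "Mom nu \<kappa> th n \<le> ennreal ((C0 / C1) * (1 * Psi_inf nu) ^ n)"
        unfolding m Mn M10 by simp
    qed simp
  next
    case True
    define b where "b = enn2real B"
    have Bb: "B = ennreal b" "b \<ge> 0" using Bfin by (auto simp: b_def)
    define m where "m = max 1 (C1 / C0)"
    define C17 where "C17 = max b 1 * m / Psi_inf nu"
    have m1: "m \<ge> 1" by (simp add: m_def)
    have C17p: "C17 > 0" using True m1 by (simp add: C17_def)
    show ?thesis
    proof (intro exI[of _ C17] conjI ballI allI impI C17p)
      fix th n assume th: "th \<in> E" and n: "(n::nat) \<ge> 1"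
      have "Mom nu \<kappa> th n \<le> ennreal (b ^ n)" using MnB[OF th n] Bb by (simp add: ennreal_power)
      also have "b ^ n \<le> (C0 / C1) * (C17 * Psi_inf nu) ^ n"
      proof -
        have e: "C17 * Psi_inf nu = max b 1 * m" using True by (simp add: C17_def)
        have "b ^ n \<le> (C0 / C1) * m * b ^ n"
        proof -
          have "C0 * (C1 / C0) \<le> C0 * m" using C0_pos by (intro mult_left_mono) (auto simp: m_def)
          then have "C1 \<le> C0 * m" using C0_pos by simp
          then have "(C0 / C1) * m \<ge> 1" using C0_pos C1p by (simp add: field_simps)
          then have "1 * b ^ n \<le> ((C0 / C1) * m) * b ^ n" using Bb(2) by (intro mult_right_mono) auto
          then show ?thesis by simp
        qed
        also have "\<dots> \<le> (C0 / C1) * (m ^ n * b ^ n)"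
        proof -
          have "m \<le> m ^ n" using m1 n by (simp add: power_increasing[of 1 n m, simplified])
          then have "m * b ^ n \<le> m ^ n * b ^ n" using Bb(2) by (intro mult_right_mono) auto
          then have "(C0 / C1) * (m * b ^ n) \<le> (C0 / C1) * (m ^ n * b ^ n)" using C0_pos C1p by (intro mult_left_mono) auto
          then show ?thesis by (simp add: mult.assoc)
        qed
        also have "\<dots> \<le> (C0 / C1) * (max b 1 * m) ^ n"
          using C0_pos C1p Bb(2) m1 by (intro mult_left_mono) (auto simp: power_mult_distrib mult.commute intro!: mult_right_mono power_mono)
        finally show ?thesis using e by simp
      qed
      then have "ennreal (b ^ n) \<le> ennreal ((C0 / C1) * (C17 * Psi_inf nu) ^ n)" by (rule ennreal_leI)
      finally show "Mom nu \<kappa> th n \<le> ennreal ((C0 / C1) * (C17 * Psi_inf nu) ^ n)" .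
    qed
  qed
  have half: "filterlim (\<lambda>R::real. R / 2) at_top at_top"
    unfolding filterlim_at_top
  proof
    fix Z :: real
    show "eventually (\<lambda>R. Z \<le> R / 2) at_top" using eventually_ge_at_top[of "2 * Z"] by eventually_elim simp
  qed
  have T1: "((\<lambda>R. SUP \<theta>\<in>E. Tl nu \<kappa> \<theta> 1 R) \<longlongrightarrow> 0) at_top"
  proof (rule tendsto_sandwich[OF _ _ tendsto_const])
    show "eventually (\<lambda>R. 0 \<le> (SUP \<theta>\<in>E. Tl nu \<kappa> \<theta> 1 R)) at_top" by simp
    show "eventually (\<lambda>R. (SUP \<theta>\<in>E. Tl nu \<kappa> \<theta> 1 R) \<le> ennreal (C0^2 / C1) * K_fun TYPE('a) f R) at_top"
      using eventually_gt_at_top[of 0]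
    proof eventually_elim
      case (elim R)
      show ?case
      proof (rule SUP_least)
        fix th assume "th \<in> E"
        then show "Tl nu \<kappa> th 1 R \<le> ennreal (C0^2 / C1) * K_fun TYPE('a) f R"
          using tail1'[of th R] elim by (simp add: Tl_def C1_def mult_ac)
      qed
    qed
    show "((\<lambda>R. ennreal (C0^2 / C1) * K_fun TYPE('a) f R) \<longlongrightarrow> 0) at_top"
      using ennreal_tendsto_cmult[OF _ K_lim, of "ennreal (C0^2 / C1)"] by simp
  qed
  have Tn: "((\<lambda>R. SUP \<theta>\<in>E. Tl nu \<kappa> \<theta> (Suc n) R) \<longlongrightarrow> 0) at_top" for n
  proof (induction n)
    case 0 then show ?case using T1 by simp
  next
    case (Suc n)
    let ?S = "\<lambda>k R. SUP \<theta>\<in>E. Tl nu \<kappa> \<theta> k R"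
    have lim2: "((\<lambda>R. ?S 1 (R/2) * B ^ Suc n + B * ?S (Suc n) (R/2)) \<longlongrightarrow> 0 * B ^ Suc n + B * 0) at_top"
    proof (intro tendsto_add)
      show "((\<lambda>R. ?S 1 (R/2) * B ^ Suc n) \<longlongrightarrow> 0 * B ^ Suc n) at_top"
        using ennreal_tendsto_cmult[OF Bpow filterlim_compose[OF T1 half], of "Suc n"]
        by (simp add: mult.commute)
      show "((\<lambda>R. B * ?S (Suc n) (R/2)) \<longlongrightarrow> B * 0) at_top"
        using ennreal_tendsto_cmult[OF Bfin filterlim_compose[OF Suc.IH half]] by simp
    qed
    show ?case
    proof (rule tendsto_sandwich[OF _ _ tendsto_const])
      show "eventually (\<lambda>R. 0 \<le> ?S (Suc (Suc n)) R) at_top" by simp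
      show "eventually (\<lambda>R. ?S (Suc (Suc n)) R \<le> ?S 1 (R/2) * B ^ Suc n + B * ?S (Suc n) (R/2)) at_top"
      proof (rule always_eventually, rule allI, rule SUP_least)
        fix R th assume th: "th \<in> E"
        have "Tl nu \<kappa> th (Suc (Suc n)) R \<le> Tl nu \<kappa> th 1 (R/2) * Mom nu \<kappa> th (Suc n) + Mom nu \<kappa> th 1 * Tl nu \<kappa> th (Suc n) (R/2)"
          by (rule Tl_rec[OF nu_meas])
        also have "\<dots> \<le> ?S 1 (R/2) * B ^ Suc n + B * ?S (Suc n) (R/2)"
          by (intro add_mono mult_mono SUP_upper th M1 MnB) auto
        finally show "Tl nu \<kappa> th (Suc (Suc n)) R \<le> ?S 1 (R/2) * B ^ Suc n + B * ?S (Suc n) (R/2)" .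
      qed
      show "((\<lambda>R. ?S 1 (R/2) * B ^ Suc n + B * ?S (Suc n) (R/2)) \<longlongrightarrow> 0) at_top"
        using lim2 by simp
    qed
  qed
  show ?thesis
  proof -
    obtain C17 where C17: "C17 > 0" "\<forall>\<theta>\<in>E. \<forall>n\<ge>1. Mom nu \<kappa> \<theta> n \<le> ennreal ((C0 / C1) * (C17 * Psi_inf nu) ^ n)"
      using part1 by blast
    have p2: "\<forall>n\<ge>1. ((\<lambda>R. SUP \<theta>\<in>E. Tl nu \<kappa> \<theta> n R) \<longlongrightarrow> 0) at_top"
    proof (intro allI impI)
      fix n :: nat assume "n \<ge> 1"
      then obtain m where "n = Suc m" by (cases n) auto
      then show "((\<lambda>R. SUP \<theta>\<in>E. Tl nu \<kappa> \<theta> n R) \<longlongrightarrow> 0) at_top" using Tn by simp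
    qed
    show ?thesis
      using C17 p2 unfolding Mom_def Tl_def C1_def by blast
  qed
qed
end
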